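(* Let $g>0$, let $F:\mathbb{R}\to\mathbb{R}$ be continuously differentiable with $F(0)=F(a)=F(1)=0$ for some $a\in\,]0,1[$, $F>0$ on $(-\infty,0[\,\cup\,]a,1[$ and $F<0$ on $]0,a[\,\cup\,]1,+\infty)$. Let $\beta>0$, let $n:\mathbb{R}\to\mathbb{R}^+$ be $\beta$-periodic and locally integrable, and let $F_0$ be the modification of $F$ described in the context. Consider the planar system \[\dot x=y,\qquad \dot y=-h(t,x),\qquad h(t,s)=-g s+n(t)F_0(s),\] and let $m\ge1$ be an integer. Then there is $R_0=R_0(m,|n|_1)>0$ such that for each initial point $z_2\in\mathbb{R}^2$ with $\|z_2\|\ge R_0$ and each $q_0\in\mathbb{R}^2$ with $\|q_0\|\le1$, the rotation number $\mathrm{rot}_m(z_2,q_0)$ is defined and \[\mathrm{rot}_m(z_2,q_0)<1.\]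
   Context: Let $\delta(s)=\max\{0,\min\{s,1\}\}$, $\ell(s)=\exp(1/s)$ for $s<0$, $\ell(s)=0$ for $0\le s\le1$, $\ell(s)=-\exp(1/(1-s))$ for $s>1$, $c_0=\max_{s\in[0,1]}|F(s)|$, and fix $0<k_0\le c_0$. Set $F_0(s)=F(\delta(s))+k_0\ell(s)$; this is a bounded, globally Lipschitz function equal to $F$ on $[0,1]$. Then every solution of the system is defined on all of $\mathbb{R}$ and unique given initial data; write $\zeta(t,0,z_0)=(x(t),y(t))$ for the solution with $\zeta(0)=z_0$. $|n|_1=\int_0^\beta n(t)\,dt$; the constant $R_0$ depends on $m$ and $|n|_1$ (given the fixed data $g,F,k_0,\beta$). For $q_0\in\mathbb{R}^2$ and $z_0$ with $\zeta(t,0,z_0)\ne q_0$ for all $t\in[0,m\beta]$, write $\zeta(t,0,z_0)-q_0=\rho(t)(\cos\theta(t),\sin\theta(t))$ with $\rho>0$ and $\theta$ continuous; the rotation number is $\mathrm{rot}_m(z_0,q_0)=\frac{\theta(0)-\theta(m\beta)}{2\pi}$, i.e. the normalized clockwise angular displacement of the solution around $q_0$ over $[0,m\beta]$. *)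

theory Defs
  imports "HOL-Analysis.Analysis"
begin

definition delta_cut :: "real \<Rightarrow> real" where
  "delta_cut s = max 0 (min s 1)"

definition ell :: "real \<Rightarrow> real" where
  "ell s = (if s < 0 then exp (1 / s) else if s \<le> 1 then 0 else - exp (1 / (1 - s)))"

definition c0_of :: "(real \<Rightarrow> real) \<Rightarrow> real" where
  "c0_of F = Sup ((\<lambda>s. \<bar>F s\<bar>) ` {0..1})"

definition F0_of :: "(real \<Rightarrow> real) \<Rightarrow> real \<Rightarrow> real \<Rightarrow> real" where
  "F0_of F k0 s = F (delta_cut s) + k0 * ell s"

definition h_of :: "real \<Rightarrow> (real \<Rightarrow> real) \<Rightarrow> real \<Rightarrow> (real \<Rightarrow> real) \<Rightarrow> real \<Rightarrow> real \<Rightarrow> real" where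
  "h_of g F k0 n t s = - g * s + n t * F0_of F k0 s"

definition vfield :: "real \<Rightarrow> (real \<Rightarrow> real) \<Rightarrow> real \<Rightarrow> (real \<Rightarrow> real) \<Rightarrow> real \<Rightarrow> real \<times> real \<Rightarrow> real \<times> real" where
  "vfield g F k0 n t z = (snd z, - h_of g F k0 n t (fst z))"

text \<open>Solution in the Caratheodory (integral) sense, defined on all of R, with zeta(0) = z0.\<close>
definition is_solution ::
  "real \<Rightarrow> (real \<Rightarrow> real) \<Rightarrow> real \<Rightarrow> (real \<Rightarrow> real) \<Rightarrow> (real \<Rightarrow> real \<times> real) \<Rightarrow> real \<times> real \<Rightarrow> bool" where
  "is_solution g F k0 n \<zeta> z0 \<longleftrightarrow>
     \<zeta> 0 = z0 \<and> continuous_on UNIV \<zeta> \<and>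
     (\<forall>a b. a \<le> b \<longrightarrow> ((\<lambda>t. vfield g F k0 n t (\<zeta> t)) has_integral (\<zeta> b - \<zeta> a)) {a..b})"

definition rot_defined :: "nat \<Rightarrow> real \<Rightarrow> (real \<Rightarrow> real \<times> real) \<Rightarrow> real \<times> real \<Rightarrow> bool" where
  "rot_defined m \<beta> \<zeta> q0 \<longleftrightarrow> (\<forall>t\<in>{0..real m * \<beta>}. \<zeta> t \<noteq> q0)"

definition is_angle :: "nat \<Rightarrow> real \<Rightarrow> (real \<Rightarrow> real \<times> real) \<Rightarrow> real \<times> real \<Rightarrow> (real \<Rightarrow> real) \<Rightarrow> bool" where
  "is_angle m \<beta> \<zeta> q0 \<theta> \<longleftrightarrow> continuous_on {0..real m * \<beta>} \<theta> \<and>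
     (\<exists>\<rho>. \<forall>t\<in>{0..real m * \<beta>}. \<rho> t > 0 \<and> \<zeta> t - q0 = \<rho> t *\<^sub>R (cos (\<theta> t), sin (\<theta> t)))"

definition rot :: "nat \<Rightarrow> real \<Rightarrow> (real \<Rightarrow> real \<times> real) \<Rightarrow> real \<times> real \<Rightarrow> real" where
  "rot m \<beta> \<zeta> q0 = (let \<theta> = (SOME \<theta>. is_angle m \<beta> \<zeta> q0 \<theta>) in (\<theta> 0 - \<theta> (real m * \<beta>)) / (2 * pi))"

end

theory Submission
  imports Defs
begin

lemma angle_halfplane_bound:
  fixes \<theta> :: "real \<Rightarrow> real" and a b T :: real
  assumes T: "0 \<le> T" and cont: "continuous_on {0..T} \<theta>"
    and pos: "\<forall>t\<in>{0..T}. a * cos (\<theta> t) + b * sin (\<theta> t) > 0"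
  shows "\<theta> 0 - \<theta> T < 2*pi"
proof (rule ccontr)
  assume H: "\<not> \<theta> 0 - \<theta> T < 2*pi"
  define r where "r = sqrt (a\<^sup>2 + b\<^sup>2)"
  have "a * cos (\<theta> 0) + b * sin (\<theta> 0) > 0" using pos T by auto
  hence ab: "a \<noteq> 0 \<or> b \<noteq> 0" by auto
  hence "a\<^sup>2 + b\<^sup>2 > 0" by (simp add: sum_power2_gt_zero_iff)
  hence rpos: "r > 0" unfolding r_def by simp
  have r2: "r\<^sup>2 = a\<^sup>2 + b\<^sup>2" unfolding r_def by simp
  have "(a/r)\<^sup>2 + (b/r)\<^sup>2 = (a\<^sup>2 + b\<^sup>2) / r\<^sup>2" by (simp add: power_divide add_divide_distrib)
  hence "(a/r)\<^sup>2 + (b/r)\<^sup>2 = 1" using r2 rpos ab by simp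
  then obtain \<alpha> where al: "a/r = cos \<alpha>" "b/r = sin \<alpha>" by (metis sincos_total_2pi)
  have aa: "a = r * cos \<alpha>" "b = r * sin \<alpha>" using al rpos by (auto simp: field_simps)
  have key: "\<And>t. a * cos (\<theta> t) + b * sin (\<theta> t) = r * cos (\<theta> t - \<alpha>)"
    unfolding aa cos_diff by (simp add: algebra_simps)
  define j where "j = \<lceil>(\<theta> T - \<alpha> - pi) / (2*pi)\<rceil>"
  define s where "s = \<alpha> + pi + of_int j * (2*pi)"
  have j1: "(\<theta> T - \<alpha> - pi) / (2*pi) \<le> of_int j" unfolding j_def by simp
  have j2: "of_int j < (\<theta> T - \<alpha> - pi) / (2*pi) + 1" unfolding j_def by linarith
  have s1: "\<theta> T \<le> s" using j1 unfolding s_def by (simp add: field_simps)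
  have s2: "s \<le> \<theta> 0" using j2 H unfolding s_def by (simp add: field_simps)
  obtain t where t: "0 \<le> t" "t \<le> T" "\<theta> t = s" using IVT2'[of \<theta> T s 0, OF s1 s2 T cont] by auto
  have "cos (\<theta> t - \<alpha>) = cos (pi + of_int j * (2 * of_real pi))" using t unfolding s_def by simp
  also have "\<dots> = -1" by (simp only: cos.plus_of_int) simp
  finally have "a * cos (\<theta> t) + b * sin (\<theta> t) = - r" using key by simp
  moreover have "0 < a * cos (\<theta> t) + b * sin (\<theta> t)" using pos t by auto
  ultimately show False using rpos by linarith
qed

lemma angle_exists:
  fixes \<zeta> :: "real \<Rightarrow> real \<times> real"
  assumes cont: "continuous_on {0..T} \<zeta>"
    and hp: "\<forall>t\<in>{0..T}. a * fst (\<zeta> t - q) + b * snd (\<zeta> t - q) > 0"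
  shows "\<exists>\<theta>. continuous_on {0..T} \<theta> \<and>
     (\<exists>\<rho>. \<forall>t\<in>{0..T}. \<rho> t > 0 \<and> \<zeta> t - q = \<rho> t *\<^sub>R (cos (\<theta> t), sin (\<theta> t)))"
proof -
  define u where "u t = fst (\<zeta> t - q)" for t
  define v where "v t = snd (\<zeta> t - q)" for t
  define c where "c t = complex_of_real (u t) + \<i> * complex_of_real (v t)" for t
  define e where "e = complex_of_real a - \<i> * complex_of_real b"
  define G where "G t = Ln (e * c t) - Ln e" for t
  have cu: "continuous_on {0..T} u" unfolding u_def by (intro continuous_intros cont)
  have cv: "continuous_on {0..T} v" unfolding v_def by (intro continuous_intros cont)
  have cc: "continuous_on {0..T} c" unfolding c_def by (intro continuous_intros cu cv)
  have Rep: "Re (e * c t) > 0" if "t \<in> {0..T}" for t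
    using hp that unfolding e_def c_def u_def v_def by simp
  have enz: "e \<noteq> 0" if "t \<in> {0..T}" for t using Rep[OF that] by auto
  have cnz: "c t \<noteq> 0" if "t \<in> {0..T}" for t using Rep[OF that] by auto
  have cL: "continuous_on {z. Re z > 0} Ln"
    by (rule continuous_on_Ln) (auto simp: complex_nonpos_Reals_iff)
  have cec: "continuous_on {0..T} (\<lambda>t. e * c t)" by (intro continuous_intros cc)
  have cLn: "continuous_on {0..T} (\<lambda>t. Ln (e * c t))"
    by (rule continuous_on_compose2[OF cL cec]) (use Rep in auto)
  have cG: "continuous_on {0..T} G" unfolding G_def
    by (intro continuous_intros cLn)
  have eG: "exp (G t) = c t" if "t \<in> {0..T}" for t
    using enz[OF that] cnz[OF that] Rep[OF that] unfolding G_def by (simp add: exp_diff)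
  show ?thesis
  proof (intro exI conjI)
    show "continuous_on {0..T} (\<lambda>t. Im (G t))" by (intro continuous_intros cG)
    show "\<forall>t\<in>{0..T}. exp (Re (G t)) > 0 \<and> \<zeta> t - q = exp (Re (G t)) *\<^sub>R (cos (Im (G t)), sin (Im (G t)))"
    proof
      fix t assume t: "t \<in> {0..T}"
      have "Re (exp (G t)) = u t" "Im (exp (G t)) = v t" using eG[OF t] unfolding c_def by auto
      hence "u t = exp (Re (G t)) * cos (Im (G t))" "v t = exp (Re (G t)) * sin (Im (G t))"
        by (simp_all add: Re_exp Im_exp)
      thus "exp (Re (G t)) > 0 \<and> \<zeta> t - q = exp (Re (G t)) *\<^sub>R (cos (Im (G t)), sin (Im (G t)))"
        unfolding u_def v_def by (simp add: prod_eq_iff)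
    qed
  qed
qed

lemma per_shift:
  fixes n :: "real \<Rightarrow> real"
  assumes "\<forall>t. n (t + \<beta>) = n t"
  shows "n (real j * \<beta> + t) = n t"
proof (induction j arbitrary: t)
  case 0 then show ?case by simp
next
  case (Suc j)
  have "n (real (Suc j) * \<beta> + t) = n ((real j * \<beta> + t) + \<beta>)" by (simp add: algebra_simps)
  also have "\<dots> = n (real j * \<beta> + t)" using assms by blast
  finally show ?case using Suc by simp
qed

lemma per_int:
  fixes n :: "real \<Rightarrow> real"
  assumes per: "\<forall>t. n (t + \<beta>) = n t" and int: "\<forall>u v. n integrable_on {u..v}" and b: "\<beta> \<ge> 0"
  shows "integral {0..real j * \<beta>} n = real j * integral {0..\<beta>} n"
proof (induction j)
  case 0 then show ?case by simp
next
  case (Suc j)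
  have "integral {0..real j * \<beta>} n + integral {real j * \<beta>..real (Suc j) * \<beta>} n
      = integral {0..real (Suc j) * \<beta>} n"
    by (rule Henstock_Kurzweil_Integration.integral_combine) (use b int in \<open>auto intro: mult_right_mono\<close>)
  moreover have "integral {real j * \<beta>..real (Suc j) * \<beta>} n = integral {0..\<beta>} n"
  proof -
    have "integral {0..\<beta>} (n \<circ> (+) (real j * \<beta>)) = integral {0 + real j * \<beta>..\<beta> + real j * \<beta>} n"
      by (rule integral_shift_Icc_real)
    moreover have "n \<circ> (+) (real j * \<beta>) = n" using per_shift[OF per] by (auto simp: fun_eq_iff)
    ultimately show ?thesis by (simp add: algebra_simps)
  qed
  ultimately show ?case using Suc by (simp add: algebra_simps)
qed

lemma F0_bound:
  assumes "continuous_on UNIV F" "k0 \<ge> (0::real)"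
  shows "\<exists>C\<ge>0. \<forall>s. \<bar>F (max 0 (min s 1)) + k0 * (if s < 0 then exp (1 / s) else if s \<le> 1 then 0 else - exp (1 / (1 - s)))\<bar> \<le> C"
proof -
  have "compact (F ` {0..1})" by (rule compact_continuous_image) (use assms in \<open>auto intro: continuous_on_subset\<close>)
  then obtain B where B: "B > 0" "\<forall>y\<in>F ` {0..1}. norm y \<le> B" using compact_imp_bounded bounded_pos by metis
  have ell: "\<bar>(if s < 0 then exp (1 / s) else if s \<le> 1 then 0 else - exp (1 / (1 - s)))\<bar> \<le> 1" for s :: real
  proof -
    have "s < 0 \<Longrightarrow> exp (1/s) \<le> 1" by (simp add: divide_neg_pos)
    moreover have "s > 1 \<Longrightarrow> exp (1/(1-s)) \<le> 1" by simp
    ultimately show ?thesis by auto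
  qed
  show ?thesis
  proof (intro exI[of _ "B + k0"] conjI allI)
    show "0 \<le> B + k0" using B assms by simp
    fix s :: real
    have "\<bar>F (max 0 (min s 1))\<bar> \<le> B" using B(2) by auto
    moreover have "\<bar>k0 * (if s < 0 then exp (1 / s) else if s \<le> 1 then 0 else - exp (1 / (1 - s)))\<bar> \<le> k0"
      using ell[of s] assms(2) by (simp add: abs_mult mult_left_le)
    ultimately show "\<bar>F (max 0 (min s 1)) + k0 * (if s < 0 then exp (1 / s) else if s \<le> 1 then 0 else - exp (1 / (1 - s)))\<bar> \<le> B + k0"
      by (smt (verit))
  qed
qed

lemma core:
  fixes x y \<phi> :: "real \<Rightarrow> real" and k T P :: real
  assumes k: "k > 0" and T: "T \<ge> 0"
    and cx: "continuous_on {0..T} x" and cy: "continuous_on {0..T} y"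
    and hx: "\<forall>t\<in>{0..T}. x t = x 0 + integral {0..t} y"
    and hy: "\<forall>t\<in>{0..T}. y t = y 0 + k\<^sup>2 * integral {0..t} x - \<phi> t"
    and hphi: "\<forall>t\<in>{0..T}. \<bar>\<phi> t\<bar> \<le> P"
  shows "\<forall>t\<in>{0..T}. \<bar>exp (-k*t) * (y t + \<phi> t + k * x t) - (y 0 + \<phi> 0 + k * x 0)\<bar> \<le> k*P*T"
    and "\<forall>t\<in>{0..T}. \<bar>exp (k*t) * (y t + \<phi> t - k * x t) - (y 0 + \<phi> 0 - k * x 0)\<bar> \<le> k*exp(k*T)*P*T"
proof -
  define X where "X t = x 0 + integral {0..t} y" for t
  define Y where "Y t = y 0 + k\<^sup>2 * integral {0..t} x" for t
  have dX: "(X has_real_derivative y t) (at t within {0..T})" if "t \<in> {0..T}" for t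
  proof -
    have "((\<lambda>u. integral {0..u} y) has_vector_derivative y t) (at t within {0..T})"
      by (rule integral_has_vector_derivative[OF cy that])
    hence "((\<lambda>u. integral {0..u} y) has_real_derivative y t) (at t within {0..T})"
      by (simp add: has_real_derivative_iff_has_vector_derivative)
    thus ?thesis unfolding X_def by (intro derivative_eq_intros) auto
  qed
  have dY: "(Y has_real_derivative k\<^sup>2 * x t) (at t within {0..T})" if "t \<in> {0..T}" for t
  proof -
    have "((\<lambda>u. integral {0..u} x) has_vector_derivative x t) (at t within {0..T})"
      by (rule integral_has_vector_derivative[OF cx that])
    hence "((\<lambda>u. integral {0..u} x) has_real_derivative x t) (at t within {0..T})"
      by (simp add: has_real_derivative_iff_has_vector_derivative)
    thus ?thesis unfolding Y_def by (intro derivative_eq_intros) auto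
  qed
  have XY: "X t = x t" "Y t = y t + \<phi> t" if "t \<in> {0..T}" for t
  proof -
    have "x t = x 0 + integral {0..t} y" "y t = y 0 + k\<^sup>2 * integral {0..t} x - \<phi> t"
      using hx hy that by blast+
    thus "X t = x t" "Y t = y t + \<phi> t" unfolding X_def Y_def by simp_all
  qed
  have X0: "X 0 = x 0" and Y0: "Y 0 = y 0 + \<phi> 0" using XY T by auto
  have conv: "convex {0..T::real}" by simp
  show "\<forall>t\<in>{0..T}. \<bar>exp (-k*t) * (y t + \<phi> t + k * x t) - (y 0 + \<phi> 0 + k * x 0)\<bar> \<le> k*P*T"
  proof
    fix t assume t: "t \<in> {0..T}"
    define f where "f s = exp (-k* s) * (Y s + k * X s)" for s
    define fd where "fd s = exp (-k* s) * (- k) * (Y s + k * X s) + exp (-k* s) * (k\<^sup>2 * x s + k * y s)" for s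
    have df: "(f has_field_derivative fd s) (at s within {0..T})" if "s \<in> {0..T}" for s
      unfolding f_def fd_def
      by (rule derivative_eq_intros dX[OF that] dY[OF that] refl | simp)+
    have bf: "norm (fd s) \<le> k * P" if "s \<in> {0..T}" for s
    proof -
      have "fd s = - k * exp (-k* s) * \<phi> s" unfolding fd_def using XY[OF that]
        by (simp add: algebra_simps power2_eq_square)
      moreover have "exp (-k* s) \<le> 1" using that k by auto
      moreover have "\<bar>\<phi> s\<bar> \<le> P" using hphi that by auto
      ultimately have "norm (fd s) = k * (exp (-k * s) * \<bar>\<phi> s\<bar>)" "exp (-k * s) * \<bar>\<phi> s\<bar> \<le> 1 * P"
        using k by (simp add: abs_mult, intro mult_mono, auto)
      thus ?thesis using k by (simp add: mult_left_mono)
    qed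
    have "norm (f t - f 0) \<le> k * P * norm (t - 0)"
      by (rule field_differentiable_bound[OF conv df bf t]) (use T in auto)
    moreover have "norm (t - 0) \<le> T" using t by auto
    moreover have "k * P \<ge> 0" using bf[of 0] T by (smt (verit) norm_ge_zero atLeastAtMost_iff)
    ultimately have "\<bar>f t - f 0\<bar> \<le> k * P * T" by (smt (verit) mult_left_mono real_norm_def)
    moreover have "f t = exp (-k*t) * (y t + \<phi> t + k * x t)" "f 0 = y 0 + \<phi> 0 + k * x 0"
      unfolding f_def using XY[OF t] X0 Y0 by (auto simp: algebra_simps)
    ultimately show "\<bar>exp (-k*t) * (y t + \<phi> t + k * x t) - (y 0 + \<phi> 0 + k * x 0)\<bar> \<le> k*P*T" by simp
  qed
  show "\<forall>t\<in>{0..T}. \<bar>exp (k*t) * (y t + \<phi> t - k * x t) - (y 0 + \<phi> 0 - k * x 0)\<bar> \<le> k*exp(k*T)*P*T"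
  proof
    fix t assume t: "t \<in> {0..T}"
    define f where "f s = exp (k* s) * (Y s - k * X s)" for s
    define fd where "fd s = exp (k* s) * k * (Y s - k * X s) + exp (k* s) * (k\<^sup>2 * x s - k * y s)" for s
    have df: "(f has_field_derivative fd s) (at s within {0..T})" if "s \<in> {0..T}" for s
      unfolding f_def fd_def
      by (rule derivative_eq_intros dX[OF that] dY[OF that] refl | simp)+
    have bf: "norm (fd s) \<le> k * exp (k*T) * P" if "s \<in> {0..T}" for s
    proof -
      have "fd s = k * exp (k* s) * \<phi> s" unfolding fd_def using XY[OF that]
        by (simp add: algebra_simps power2_eq_square)
      moreover have "exp (k* s) \<le> exp (k*T)" using that k by (auto intro: mult_left_mono)
      moreover have "\<bar>\<phi> s\<bar> \<le> P" using hphi that by auto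
      ultimately have "norm (fd s) = k * (exp (k * s) * \<bar>\<phi> s\<bar>)" "exp (k * s) * \<bar>\<phi> s\<bar> \<le> exp (k*T) * P"
        using k by (simp add: abs_mult, intro mult_mono, auto)
      thus ?thesis using k by (simp add: mult_left_mono mult.assoc)
    qed
    have "norm (f t - f 0) \<le> k * exp (k*T) * P * norm (t - 0)"
      by (rule field_differentiable_bound[OF conv df bf t]) (use T in auto)
    moreover have "norm (t - 0) \<le> T" using t by auto
    moreover have "k * exp (k*T) * P \<ge> 0" using bf[of 0] T by (smt (verit) norm_ge_zero atLeastAtMost_iff)
    ultimately have "\<bar>f t - f 0\<bar> \<le> k * exp (k*T) * P * T" by (smt (verit) mult_left_mono real_norm_def)
    moreover have "f t = exp (k*t) * (y t + \<phi> t - k * x t)" "f 0 = y 0 + \<phi> 0 - k * x 0"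
      unfolding f_def using XY[OF t] X0 Y0 by (auto simp: algebra_simps)
    ultimately show "\<bar>exp (k*t) * (y t + \<phi> t - k * x t) - (y 0 + \<phi> 0 - k * x 0)\<bar> \<le> k*exp(k*T)*P*T" by simp
  qed
qed

lemma halfplane_rot:
  fixes \<zeta> :: "real \<Rightarrow> real \<times> real"
  assumes cont: "continuous_on UNIV \<zeta>" and T: "real m * \<beta> \<ge> 0"
    and hp: "\<forall>t\<in>{0..real m * \<beta>}. a * fst (\<zeta> t - q) + b * snd (\<zeta> t - q) > 0"
  shows "rot_defined m \<beta> \<zeta> q \<and> rot m \<beta> \<zeta> q < 1"
proof
  show "rot_defined m \<beta> \<zeta> q" unfolding rot_defined_def
  proof
    fix t assume "t \<in> {0..real m * \<beta>}"
    with hp have "a * fst (\<zeta> t - q) + b * snd (\<zeta> t - q) > 0" by blast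
    thus "\<zeta> t \<noteq> q" by auto
  qed
  have c2: "continuous_on {0..real m * \<beta>} \<zeta>" using cont by (rule continuous_on_subset) auto
  have "\<exists>\<theta>. is_angle m \<beta> \<zeta> q \<theta>" unfolding is_angle_def by (rule angle_exists[OF c2 hp])
  hence "is_angle m \<beta> \<zeta> q (SOME \<theta>. is_angle m \<beta> \<zeta> q \<theta>)" by (rule someI_ex)
  then obtain \<theta> \<rho> where th: "\<theta> = (SOME \<theta>. is_angle m \<beta> \<zeta> q \<theta>)"
    and c\<theta>: "continuous_on {0..real m * \<beta>} \<theta>"
    and r: "\<forall>t\<in>{0..real m * \<beta>}. \<rho> t > 0 \<and> \<zeta> t - q = \<rho> t *\<^sub>R (cos (\<theta> t), sin (\<theta> t))"
    unfolding is_angle_def by blast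
  have pos: "\<forall>t\<in>{0..real m * \<beta>}. a * cos (\<theta> t) + b * sin (\<theta> t) > 0"
  proof
    fix t assume t: "t \<in> {0..real m * \<beta>}"
    have r1: "\<rho> t > 0" "\<zeta> t - q = \<rho> t *\<^sub>R (cos (\<theta> t), sin (\<theta> t))" using r t by auto
    have "a * fst (\<zeta> t - q) + b * snd (\<zeta> t - q) > 0" using hp t by blast
    hence "\<rho> t * (a * cos (\<theta> t) + b * sin (\<theta> t)) > 0" unfolding r1(2) by (simp add: algebra_simps)
    thus "a * cos (\<theta> t) + b * sin (\<theta> t) > 0" using r1(1) by (simp add: zero_less_mult_iff)
  qed
  have "\<theta> 0 - \<theta> (real m * \<beta>) < 2 * pi" by (rule angle_halfplane_bound[OF T c\<theta> pos])
  thus "rot m \<beta> \<zeta> q < 1" unfolding rot_def Let_def th[symmetric] by simp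
qed


theorem lemma2:
  fixes g a \<beta> k0 :: real and F :: "real \<Rightarrow> real" and m :: nat
  assumes g_pos: "g > 0"
    and F_C1: "F C1_differentiable_on UNIV"
    and a_in: "0 < a" "a < 1"
    and F_zeros: "F 0 = 0" "F a = 0" "F 1 = 0"
    and F_pos: "\<And>s. s < 0 \<or> (a < s \<and> s < 1) \<Longrightarrow> F s > 0"
    and F_neg: "\<And>s. (0 < s \<and> s < a) \<or> 1 < s \<Longrightarrow> F s < 0"
    and beta_pos: "\<beta> > 0"
    and k0: "0 < k0" "k0 \<le> c0_of F"
    and m_ge: "m \<ge> 1"
  shows "\<forall>L. \<exists>R0>0. \<forall>n :: real \<Rightarrow> real.
           (\<forall>t. n t \<ge> 0) \<and> (\<forall>t. n (t + \<beta>) = n t) \<and>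
           (\<forall>u v. n integrable_on {u..v}) \<and> integral {0..\<beta>} n = L \<longrightarrow>
           (\<forall>z2 q0 \<zeta>. norm z2 \<ge> R0 \<and> norm q0 \<le> 1 \<and> is_solution g F k0 n \<zeta> z2 \<longrightarrow>
              rot_defined m \<beta> \<zeta> q0 \<and> rot m \<beta> \<zeta> q0 < 1)"
proof
  fix L :: real
  have Fc: "continuous_on UNIV F" using F_C1 by (rule C1_differentiable_imp_continuous_on)
  obtain C where C: "C \<ge> 0" "\<And>s. \<bar>F0_of F k0 s\<bar> \<le> C"
    using F0_bound[OF Fc, of k0] k0(1) unfolding F0_of_def delta_cut_def ell_def by auto
  define k where "k = sqrt g"
  have kpos: "k > 0" and kk: "k\<^sup>2 = g" unfolding k_def using g_pos by auto
  define T where "T = real m * \<beta>"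
  have T0: "T \<ge> 0" unfolding T_def using beta_pos by simp
  define P where "P = C * real m * \<bar>L\<bar>"
  have P0: "P \<ge> 0" unfolding P_def using C by simp
  define D1 where "D1 = k * P * T"
  define D2 where "D2 = k * exp (k * T) * P * T"
  define M where "M = P + k + 2"
  define Q where "Q = max (D1 + M) (D2 + M * exp (k * T))"
  define R0 where "R0 = 2 * (Q + 1) / min 1 k"
  have D10: "D1 \<ge> 0" and D20: "D2 \<ge> 0" unfolding D1_def D2_def using kpos P0 T0 by auto
  have Q0: "Q \<ge> 0" unfolding Q_def M_def using D10 P0 kpos by auto
  have R0pos: "R0 > 0" unfolding R0_def using Q0 kpos by auto
  show "\<exists>R0>0. \<forall>n :: real \<Rightarrow> real.
           (\<forall>t. n t \<ge> 0) \<and> (\<forall>t. n (t + \<beta>) = n t) \<and>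
           (\<forall>u v. n integrable_on {u..v}) \<and> integral {0..\<beta>} n = L \<longrightarrow>
           (\<forall>z2 q0 \<zeta>. norm z2 \<ge> R0 \<and> norm q0 \<le> 1 \<and> is_solution g F k0 n \<zeta> z2 \<longrightarrow>
              rot_defined m \<beta> \<zeta> q0 \<and> rot m \<beta> \<zeta> q0 < 1)"
  proof (intro exI[of _ R0] conjI R0pos allI impI)
    fix n :: "real \<Rightarrow> real" and z2 q0 :: "real \<times> real" and \<zeta> :: "real \<Rightarrow> real \<times> real"
    assume nass: "(\<forall>t. n t \<ge> 0) \<and> (\<forall>t. n (t + \<beta>) = n t) \<and>
           (\<forall>u v. n integrable_on {u..v}) \<and> integral {0..\<beta>} n = L"
    assume zass: "norm z2 \<ge> R0 \<and> norm q0 \<le> 1 \<and> is_solution g F k0 n \<zeta> z2"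
    have nn: "\<And>t. n t \<ge> 0" and nper: "\<forall>t. n (t + \<beta>) = n t"
      and nint: "\<forall>u v. n integrable_on {u..v}" and nL: "integral {0..\<beta>} n = L" using nass by auto
    have z2R: "norm z2 \<ge> R0" and q01: "norm q0 \<le> 1" and sol: "is_solution g F k0 n \<zeta> z2" using zass by auto
    have z0: "\<zeta> 0 = z2" and cz: "continuous_on UNIV \<zeta>"
      and hint: "\<And>a b. a \<le> b \<Longrightarrow> ((\<lambda>t. vfield g F k0 n t (\<zeta> t)) has_integral (\<zeta> b - \<zeta> a)) {a..b}"
      using sol unfolding is_solution_def by auto
    define x where "x t = fst (\<zeta> t)" for t
    define y where "y t = snd (\<zeta> t)" for t
    define \<phi> where "\<phi> t = integral {0..t} (\<lambda>s. n s * F0_of F k0 (x s))" for t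
    have cx: "continuous_on {0..T} x" unfolding x_def
      by (intro continuous_intros continuous_on_subset[OF cz]) auto
    have cy: "continuous_on {0..T} y" unfolding y_def
      by (intro continuous_intros continuous_on_subset[OF cz]) auto
    have hx: "\<forall>t\<in>{0..T}. x t = x 0 + integral {0..t} y"
    proof
      fix t assume t: "t \<in> {0..T}"
      have "((\<lambda>t. vfield g F k0 n t (\<zeta> t)) has_integral (\<zeta> t - \<zeta> 0)) {0..t}" using hint t by auto
      from has_integral_linear[OF this bounded_linear_fst]
      have "(y has_integral (x t - x 0)) {0..t}" unfolding x_def y_def vfield_def o_def by simp
      thus "x t = x 0 + integral {0..t} y" by (simp add: integral_unique)
    qed
    have hy: "\<forall>t\<in>{0..T}. y t = y 0 + k\<^sup>2 * integral {0..t} x - \<phi> t"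
    proof
      fix t assume t: "t \<in> {0..T}"
      have "((\<lambda>t. vfield g F k0 n t (\<zeta> t)) has_integral (\<zeta> t - \<zeta> 0)) {0..t}" using hint t by auto
      from has_integral_linear[OF this bounded_linear_snd]
      have h1: "((\<lambda>s. g * x s - n s * F0_of F k0 (x s)) has_integral (y t - y 0)) {0..t}"
        unfolding x_def y_def vfield_def h_of_def o_def by simp
      have cx': "continuous_on {0..t} x" using cx t by (auto intro: continuous_on_subset)
      have i2: "(\<lambda>s. g * x s) integrable_on {0..t}"
        by (intro integrable_continuous_real continuous_intros cx')
      have i3: "(\<lambda>s. g * x s - (g * x s - n s * F0_of F k0 (x s))) integrable_on {0..t}"
        by (rule integrable_diff[OF i2]) (use h1 in blast)
      have "integral {0..t} (\<lambda>s. g * x s - n s * F0_of F k0 (x s))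
          = integral {0..t} (\<lambda>s. g * x s) - integral {0..t} (\<lambda>s. g * x s - (g * x s - n s * F0_of F k0 (x s)))"
        by (subst integral_diff[symmetric, OF i2 i3]) simp
      also have "\<dots> = g * integral {0..t} x - \<phi> t" unfolding \<phi>_def by simp
      finally show "y t = y 0 + k\<^sup>2 * integral {0..t} x - \<phi> t" using h1 kk by (simp add: integral_unique)
    qed
    have intT: "integral {0..T} n = real m * L" unfolding T_def
      using per_int[OF nper nint, of m] beta_pos nL by simp
    have hphi: "\<forall>t\<in>{0..T}. \<bar>\<phi> t\<bar> \<le> P"
    proof
      fix t assume t: "t \<in> {0..T}"
      have cx': "continuous_on {0..t} x" using cx t by (auto intro: continuous_on_subset)
      have i2: "(\<lambda>s. g * x s) integrable_on {0..t}"
        by (intro integrable_continuous_real continuous_intros cx')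
      have "((\<lambda>t. vfield g F k0 n t (\<zeta> t)) has_integral (\<zeta> t - \<zeta> 0)) {0..t}" using hint t by auto
      from has_integral_linear[OF this bounded_linear_snd]
      have h1: "((\<lambda>s. g * x s - n s * F0_of F k0 (x s)) has_integral (y t - y 0)) {0..t}"
        unfolding x_def y_def vfield_def h_of_def o_def by simp
      have i3: "(\<lambda>s. g * x s - (g * x s - n s * F0_of F k0 (x s))) integrable_on {0..t}"
        by (rule integrable_diff[OF i2]) (use h1 in blast)
      hence i4: "(\<lambda>s. n s * F0_of F k0 (x s)) integrable_on {0..t}" by simp
      have "norm (\<phi> t) \<le> integral {0..t} (\<lambda>s. C * n s)" unfolding \<phi>_def
      proof (rule integral_norm_bound_integral[OF i4])
        show "(\<lambda>s. C * n s) integrable_on {0..t}" using integrable_cmul[of n "{0..t}" C] nint by simp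
        show "norm (n s * F0_of F k0 (x s)) \<le> C * n s" if "s \<in> {0..t}" for s
        proof -
          have "n s * \<bar>F0_of F k0 (x s)\<bar> \<le> n s * C" by (rule mult_left_mono[OF C(2) nn])
          thus ?thesis using nn[of s] by (simp add: abs_mult mult.commute)
        qed
      qed
      also have "\<dots> = C * integral {0..t} n" by simp
      also have "\<dots> \<le> C * integral {0..T} n"
        using C(1) t nint nn by (intro mult_left_mono integral_subset_le) auto
      also have "\<dots> \<le> P"
      proof -
        have "real m * L \<le> real m * \<bar>L\<bar>" by (intro mult_left_mono) auto
        hence "C * (real m * L) \<le> C * (real m * \<bar>L\<bar>)" using C(1) by (rule mult_left_mono)
        thus ?thesis unfolding P_def intT by (simp add: mult.assoc)
      qed
      finally show "\<bar>\<phi> t\<bar> \<le> P" by simp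
    qed
    have phi0: "\<phi> 0 = 0" unfolding \<phi>_def by simp
    note co = core[OF kpos T0 cx cy hx hy hphi]
    define p0 where "p0 = y 0 + k * x 0"
    define r0 where "r0 = y 0 - k * x 0"
    have co1: "\<forall>t\<in>{0..T}. \<bar>exp (-k*t) * (y t + \<phi> t + k * x t) - p0\<bar> \<le> D1"
      using co(1) phi0 unfolding p0_def D1_def by simp
    have co2: "\<forall>t\<in>{0..T}. \<bar>exp (k*t) * (y t + \<phi> t - k * x t) - r0\<bar> \<le> D2"
      using co(2) phi0 unfolding r0_def D2_def by simp
    have "norm (fst q0) \<le> norm (fst q0, snd q0)" by (rule norm_fst_le)
    moreover have "norm (snd q0) \<le> norm (fst q0, snd q0)" by (rule norm_snd_le)
    ultimately have q1: "\<bar>fst q0\<bar> \<le> 1" "\<bar>snd q0\<bar> \<le> 1" using q01 by simp_all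
    have kq: "\<bar>k * fst q0\<bar> \<le> k" using q1(1) kpos by (simp add: abs_mult mult_left_le)
    have xy0: "z2 = (x 0, y 0)" unfolding x_def y_def z0 by simp
    have big: "\<bar>p0\<bar> > Q \<or> \<bar>r0\<bar> > Q"
    proof (rule ccontr)
      assume "\<not> (\<bar>p0\<bar> > Q \<or> \<bar>r0\<bar> > Q)"
      hence a1: "\<bar>p0\<bar> \<le> Q" "\<bar>r0\<bar> \<le> Q" by auto
      have y0: "\<bar>y 0\<bar> \<le> Q" using a1 unfolding p0_def r0_def by linarith
      have "\<bar>k * x 0\<bar> \<le> Q" using a1 unfolding p0_def r0_def by linarith
      hence x0: "k * \<bar>x 0\<bar> \<le> Q" using kpos by (simp add: abs_mult)
      have nz: "norm z2 \<le> \<bar>x 0\<bar> + \<bar>y 0\<bar>" using norm_Pair_le[of "x 0" "y 0"] xy0 by simp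
      show False
      proof (cases "k \<le> 1")
        case True
        hence "\<bar>x 0\<bar> \<le> Q / k" using x0 kpos by (simp add: field_simps)
        moreover have "Q \<le> Q / k" using True kpos Q0 by (simp add: field_simps mult_left_le)
        moreover have "R0 = 2 * (Q + 1) / k" unfolding R0_def using True by simp
        ultimately have "norm z2 \<le> Q / k + Q / k" using nz y0 by linarith
        also have "\<dots> = 2 * Q / k" by simp
        also have "\<dots> < 2 * (Q + 1) / k" using kpos by (intro divide_strict_right_mono) auto
        finally have "norm z2 < R0" using \<open>R0 = 2 * (Q + 1) / k\<close> by simp
        thus False using z2R by simp
      next
        case False
        hence "\<bar>x 0\<bar> \<le> Q" using x0 kpos Q0
          by (smt (verit) mult_le_cancel_right1 abs_ge_zero mult.commute)
        moreover have "R0 = 2 * (Q + 1)" unfolding R0_def using False by simp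
        ultimately have "norm z2 < R0" using nz y0 by simp
        thus False using z2R by simp
      qed
    qed
    have QD1: "Q \<ge> D1 + M" and QD2: "Q \<ge> D2 + M * exp (k * T)" unfolding Q_def by auto
    have M0: "M > 0" unfolding M_def using P0 kpos by simp
    have pt: "\<bar>\<phi> t\<bar> \<le> P" if "t \<in> {0..T}" for t using hphi that by blast
    have "\<exists>a b. \<forall>t\<in>{0..T}. a * fst (\<zeta> t - q0) + b * snd (\<zeta> t - q0) > 0"
    proof -
      have fs: "fst (\<zeta> t - q0) = x t - fst q0" "snd (\<zeta> t - q0) = y t - snd q0" for t
        unfolding x_def y_def by simp_all
      have caseA: "\<bar>y t + \<phi> t + k * x t\<bar> > M" if t: "t \<in> {0..T}" and pb: "\<bar>p0\<bar> > Q" for t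
      proof -
        let ?A = "y t + \<phi> t + k * x t"
        have e: "\<bar>exp (-k*t) * ?A - p0\<bar> \<le> D1" using co1 t by blast
        have "\<bar>exp (-k*t) * ?A\<bar> > M" using e pb QD1 by linarith
        hence "exp (-k*t) * \<bar>?A\<bar> > M" by (simp add: abs_mult)
        moreover have "exp (-k*t) * \<bar>?A\<bar> \<le> \<bar>?A\<bar>"
          by (rule mult_left_le_one_le) (use t kpos in auto)
        ultimately show ?thesis by linarith
      qed
      have caseB: "\<bar>y t + \<phi> t - k * x t\<bar> > M" if t: "t \<in> {0..T}" and rb: "\<bar>r0\<bar> > Q" for t
      proof -
        let ?B = "y t + \<phi> t - k * x t"
        have e: "\<bar>exp (k*t) * ?B - r0\<bar> \<le> D2" using co2 t by blast
        have h1: "\<bar>exp (k*t) * ?B\<bar> > M * exp (k * T)" using e rb QD2 by linarith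
        have h2: "M * exp (k * T) \<ge> M * exp (k * t)" using t kpos M0 by (auto intro: mult_left_mono)
        have h3: "\<bar>exp (k*t) * ?B\<bar> = exp (k*t) * \<bar>?B\<bar>" by (simp add: abs_mult)
        have "M * exp (k * t) < exp (k*t) * \<bar>?B\<bar>" using h1 h2 h3 by linarith
        hence "exp (k * t) * M < exp (k*t) * \<bar>?B\<bar>" by (metis mult.commute)
        thus ?thesis using mult_less_cancel_left_pos[of "exp (k*t)" M "\<bar>?B\<bar>"] by simp
      qed
      from big show ?thesis
      proof
        assume pb: "\<bar>p0\<bar> > Q"
        show ?thesis
        proof (cases "p0 > 0")
          case True
          have "\<forall>t\<in>{0..T}. k * fst (\<zeta> t - q0) + 1 * snd (\<zeta> t - q0) > 0"
          proof
            fix t assume t: "t \<in> {0..T}"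
            have e: "\<bar>exp (-k*t) * (y t + \<phi> t + k * x t) - p0\<bar> \<le> D1" using co1 t by blast
            have "exp (-k*t) * (y t + \<phi> t + k * x t) > 0" using e True pb QD1 M0 by linarith
            hence "y t + \<phi> t + k * x t > 0" by (simp add: zero_less_mult_iff)
            hence "y t + \<phi> t + k * x t > M" using caseA[OF t pb] by linarith
            thus "k * fst (\<zeta> t - q0) + 1 * snd (\<zeta> t - q0) > 0"
              unfolding fs using pt[OF t] kq q1 unfolding M_def by (simp add: algebra_simps; linarith)
          qed
          thus ?thesis by blast
        next
          case False
          have "\<forall>t\<in>{0..T}. (-k) * fst (\<zeta> t - q0) + (-1) * snd (\<zeta> t - q0) > 0"
          proof
            fix t assume t: "t \<in> {0..T}"
            have e: "\<bar>exp (-k*t) * (y t + \<phi> t + k * x t) - p0\<bar> \<le> D1" using co1 t by blast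
            have "exp (-k*t) * (y t + \<phi> t + k * x t) < 0" using e False pb QD1 M0 by linarith
            hence "y t + \<phi> t + k * x t < 0" by (simp add: mult_less_0_iff)
            hence "y t + \<phi> t + k * x t < - M" using caseA[OF t pb] by linarith
            thus "(-k) * fst (\<zeta> t - q0) + (-1) * snd (\<zeta> t - q0) > 0"
              unfolding fs using pt[OF t] kq q1 unfolding M_def by (simp add: algebra_simps; linarith)
          qed
          thus ?thesis by blast
        qed
      next
        assume rb: "\<bar>r0\<bar> > Q"
        show ?thesis
        proof (cases "r0 > 0")
          case True
          have "\<forall>t\<in>{0..T}. (-k) * fst (\<zeta> t - q0) + 1 * snd (\<zeta> t - q0) > 0"
          proof
            fix t assume t: "t \<in> {0..T}"
            have e: "\<bar>exp (k*t) * (y t + \<phi> t - k * x t) - r0\<bar> \<le> D2" using co2 t by blast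
            have "M * exp (k * T) \<ge> 0" using M0 by simp
            hence "exp (k*t) * (y t + \<phi> t - k * x t) > 0" using e True rb QD2 by linarith
            hence "y t + \<phi> t - k * x t > 0" by (simp add: zero_less_mult_iff)
            hence "y t + \<phi> t - k * x t > M" using caseB[OF t rb] by linarith
            thus "(-k) * fst (\<zeta> t - q0) + 1 * snd (\<zeta> t - q0) > 0"
              unfolding fs using pt[OF t] kq q1 unfolding M_def by (simp add: algebra_simps; linarith)
          qed
          thus ?thesis by blast
        next
          case False
          have "\<forall>t\<in>{0..T}. k * fst (\<zeta> t - q0) + (-1) * snd (\<zeta> t - q0) > 0"
          proof
            fix t assume t: "t \<in> {0..T}"
            have e: "\<bar>exp (k*t) * (y t + \<phi> t - k * x t) - r0\<bar> \<le> D2" using co2 t by blast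
            have "M * exp (k * T) \<ge> 0" using M0 by simp
            hence "exp (k*t) * (y t + \<phi> t - k * x t) < 0" using e False rb QD2 by linarith
            hence "y t + \<phi> t - k * x t < 0" by (simp add: mult_less_0_iff)
            hence "y t + \<phi> t - k * x t < - M" using caseB[OF t rb] by linarith
            thus "k * fst (\<zeta> t - q0) + (-1) * snd (\<zeta> t - q0) > 0"
              unfolding fs using pt[OF t] kq q1 unfolding M_def by (simp add: algebra_simps; linarith)
          qed
          thus ?thesis by blast
        qed
      qed
    qed
    then obtain a b where "\<forall>t\<in>{0..T}. a * fst (\<zeta> t - q0) + b * snd (\<zeta> t - q0) > 0" by blast
    hence "\<forall>t\<in>{0..real m * \<beta>}. a * fst (\<zeta> t - q0) + b * snd (\<zeta> t - q0) > 0" unfolding T_def .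
    from halfplane_rot[OF cz _ this] T0 have RR: "rot_defined m \<beta> \<zeta> q0 \<and> rot m \<beta> \<zeta> q0 < 1"
      unfolding T_def by simp
    thus "rot_defined m \<beta> \<zeta> q0" by simp
    from RR show "rot m \<beta> \<zeta> q0 < 1" by simp
  qed
qed

end
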